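(* Let $\omega:\mathbb N\to[1,\infty)$ be an unbounded weight on $\mathbb N_{\min}$. Then $(\ell^1_\omega(\mathbb N_{\min}),M_2(\mathbb C))$ is not a uniformly AMNM pair.
   Context: $\mathbb N_{\min}$ is the semilattice $\mathbb N$ with product $\min$; every $\omega:\mathbb N\to[1,\infty)$ is a submultiplicative weight on it. $\ell^1_\omega(\mathbb N_{\min})$ is the Banach space of $a:\mathbb N\to\mathbb C$ with $\|a\|=\sum_n|a(n)|\omega(n)<\infty$, with convolution $\delta_m*\delta_n=\delta_{\min(m,n)}$. $M_2(\mathbb C)$ has the operator norm. For a bounded linear $T:A\to B$ between Banach algebras, $\operatorname{def}(T)=\sup\{\|T(xy)-T(x)T(y)\|:\|x\|,\|y\|\le1\}$ and $\operatorname{Mult}(A,B)$ is the set of bounded multiplicative linear maps (including $0$). $(A,B)$ is a uniformly AMNM pair if for every $\varepsilon>0$ there is $\delta>0$ such that every bounded linear $T:A\to B$ with $\operatorname{def}(T)\le\delta$ satisfies $\operatorname{dist}(T,\operatorname{Mult}(A,B))\le\varepsilon$ in operator norm. *)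

theory Defs
  imports "HOL-Analysis.Analysis"
begin

definition l1w :: "(nat \<Rightarrow> real) \<Rightarrow> (nat \<Rightarrow> complex) set" where
  "l1w \<omega> = {a. summable (\<lambda>n. cmod (a n) * \<omega> n)}"

definition l1w_norm :: "(nat \<Rightarrow> real) \<Rightarrow> (nat \<Rightarrow> complex) \<Rightarrow> real" where
  "l1w_norm \<omega> a = (\<Sum>n. cmod (a n) * \<omega> n)"

text \<open>Convolution on N_min: bilinear extension of delta_m * delta_n = delta_(min m n).\<close>
definition minconv :: "(nat \<Rightarrow> complex) \<Rightarrow> (nat \<Rightarrow> complex) \<Rightarrow> nat \<Rightarrow> complex" where
  "minconv a b k = infsum (\<lambda>(m, n). a m * b n) {(m, n). min m n = k}"

definition m2norm :: "complex^2^2 \<Rightarrow> real" where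
  "m2norm A = onorm (\<lambda>x::complex^2. A *v x)"

definition bounded_lin_l1w :: "(nat \<Rightarrow> real) \<Rightarrow> ((nat \<Rightarrow> complex) \<Rightarrow> complex^2^2) \<Rightarrow> bool" where
  "bounded_lin_l1w \<omega> T \<longleftrightarrow>
     (\<forall>a\<in>l1w \<omega>. \<forall>b\<in>l1w \<omega>. T (\<lambda>n. a n + b n) = T a + T b) \<and>
     (\<forall>a\<in>l1w \<omega>. \<forall>c::complex. T (\<lambda>n. c * a n) = (\<chi> i j. c * T a $ i $ j)) \<and>
     (\<exists>K. \<forall>a\<in>l1w \<omega>. m2norm (T a) \<le> K * l1w_norm \<omega> a)"

definition op_norm_l1w :: "(nat \<Rightarrow> real) \<Rightarrow> ((nat \<Rightarrow> complex) \<Rightarrow> complex^2^2) \<Rightarrow> real" where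
  "op_norm_l1w \<omega> T = Sup {m2norm (T a) | a. a \<in> l1w \<omega> \<and> l1w_norm \<omega> a \<le> 1}"

definition defect :: "(nat \<Rightarrow> real) \<Rightarrow> ((nat \<Rightarrow> complex) \<Rightarrow> complex^2^2) \<Rightarrow> real" where
  "defect \<omega> T = Sup {m2norm (T (minconv a b) - T a ** T b) | a b.
      a \<in> l1w \<omega> \<and> b \<in> l1w \<omega> \<and> l1w_norm \<omega> a \<le> 1 \<and> l1w_norm \<omega> b \<le> 1}"

definition Mult_l1w :: "(nat \<Rightarrow> real) \<Rightarrow> ((nat \<Rightarrow> complex) \<Rightarrow> complex^2^2) set" where
  "Mult_l1w \<omega> = {S. bounded_lin_l1w \<omega> S \<and>
      (\<forall>a\<in>l1w \<omega>. \<forall>b\<in>l1w \<omega>. S (minconv a b) = S a ** S b)}"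

definition dist_Mult :: "(nat \<Rightarrow> real) \<Rightarrow> ((nat \<Rightarrow> complex) \<Rightarrow> complex^2^2) \<Rightarrow> real" where
  "dist_Mult \<omega> T = Inf {op_norm_l1w \<omega> (\<lambda>a. T a - S a) | S. S \<in> Mult_l1w \<omega>}"

definition uniformly_AMNM_l1w_M2 :: "(nat \<Rightarrow> real) \<Rightarrow> bool" where
  "uniformly_AMNM_l1w_M2 \<omega> \<longleftrightarrow>
     (\<forall>\<epsilon>>0. \<exists>\<delta>>0. \<forall>T. bounded_lin_l1w \<omega> T \<and> defect \<omega> T \<le> \<delta> \<longrightarrow> dist_Mult \<omega> T \<le> \<epsilon>)"

end

theory Submission
  imports Defs
begin


lemma norm_axis_c: "norm (axis j (1::complex)) = 1"
proof -
  have "(\<Sum>i\<in>UNIV. (norm (axis j (1::complex) $ i))\<^sup>2) = 1"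
    by (simp add: axis_def if_distrib[of "\<lambda>z. (norm z)^2"] cong: if_cong)
  then show ?thesis by (simp add: norm_vec_def L2_set_def)
qed

lemma m2_entry: "cmod (A$i$j) \<le> m2norm A"
proof -
  have "cmod (A$i$j) = norm ((A *v axis j 1) $ i)"
    by (simp add: matrix_vector_mult_def axis_def if_distrib[of "\<lambda>z. _ * z"] cong: if_cong)
  also have "\<dots> \<le> norm (A *v axis j 1)" by (rule Finite_Cartesian_Product.norm_nth_le)
  also have "\<dots> \<le> onorm ((*v) A) * norm (axis j (1::complex))"
    by (rule onorm[OF matrix_vector_mul_bounded_linear])
  also have "\<dots> = m2norm A" by (simp add: m2norm_def norm_axis_c)
  finally show ?thesis .
qed

lemma m2_nonneg: "0 \<le> m2norm A"
  unfolding m2norm_def by (rule onorm_pos_le[OF matrix_vector_mul_bounded_linear])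

lemma m2_bound: "m2norm A \<le> (\<Sum>i\<in>UNIV. \<Sum>j\<in>UNIV. cmod (A$i$j))"
  unfolding m2norm_def
proof (rule onorm_bound)
  show "0 \<le> (\<Sum>i\<in>UNIV. \<Sum>j\<in>UNIV. cmod (A$i$j))" by (intro sum_nonneg) auto
  fix x :: "complex^2"
  have "norm (A *v x) \<le> (\<Sum>i\<in>UNIV. norm ((A *v x)$i))"
    unfolding norm_vec_def by (rule L2_set_le_sum) auto
  also have "\<dots> \<le> (\<Sum>i\<in>UNIV. (\<Sum>j\<in>UNIV. cmod (A$i$j)) * norm x)"
  proof (rule sum_mono)
    fix i
    have "norm ((A *v x)$i) = norm (\<Sum>j\<in>UNIV. A$i$j * x$j)"
      by (simp add: matrix_vector_mult_def)
    also have "\<dots> \<le> (\<Sum>j\<in>UNIV. norm (A$i$j * x$j))" by (rule norm_sum)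
    also have "\<dots> \<le> (\<Sum>j\<in>UNIV. cmod (A$i$j) * norm x)"
      unfolding norm_mult by (intro sum_mono mult_left_mono) (auto simp: Finite_Cartesian_Product.norm_nth_le)
    finally show "norm ((A *v x)$i) \<le> (\<Sum>j\<in>UNIV. cmod (A$i$j)) * norm x"
      by (simp add: sum_distrib_right)
  qed
  finally show "norm (A *v x) \<le> (\<Sum>i\<in>UNIV. \<Sum>j\<in>UNIV. cmod (A$i$j)) * norm x"
    by (simp add: sum_distrib_right)
qed



lemma l1w_norm_summable:
  assumes w: "\<And>n. 1 \<le> \<omega> n" and a: "a \<in> l1w \<omega>"
  shows "summable (\<lambda>n. norm (a n))"
proof (rule summable_comparison_test')
  show "summable (\<lambda>n. cmod (a n) * \<omega> n)" using a by (simp add: l1w_def)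
  fix n show "norm (norm (a n)) \<le> cmod (a n) * \<omega> n"
    using w[of n] by (simp add: mult_le_cancel_left1)
qed

lemma l1w_summable_on:
  assumes w: "\<And>n. 1 \<le> \<omega> n" and a: "a \<in> l1w \<omega>"
  shows "a summable_on A"
  using summable_on_subset[OF norm_summable_imp_summable_on[OF l1w_norm_summable[OF w a]]]
  by blast

lemma l1w_abs_summable_on:
  assumes w: "\<And>n. 1 \<le> \<omega> n" and a: "a \<in> l1w \<omega>"
  shows "(\<lambda>n. norm (a n)) summable_on A"
proof -
  have "(\<lambda>n. norm (a n)) summable_on UNIV"
    by (rule summable_nonneg_imp_summable_on[OF l1w_norm_summable[OF w a]]) auto
  then show ?thesis by (rule summable_on_subset) auto
qed

lemma wnn: assumes w: "\<And>n. 1 \<le> \<omega> n" shows "0 \<le> cmod (a x) * \<omega> x"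
  using w[of x] by simp

lemma l1w_weighted_has_sum:
  assumes w: "\<And>n. 1 \<le> \<omega> n" and a: "a \<in> l1w \<omega>"
  shows "((\<lambda>n. cmod (a n) * \<omega> n) has_sum l1w_norm \<omega> a) UNIV"
  unfolding l1w_norm_def
proof (rule sums_nonneg_imp_has_sum)
  show "(\<lambda>n. cmod (a n) * \<omega> n) sums (\<Sum>n. cmod (a n) * \<omega> n)"
    using a by (simp add: l1w_def summable_sums)
  fix n show "0 \<le> cmod (a n) * \<omega> n" using w[of n] by simp
qed

lemma l1w_infsum_le:
  assumes w: "\<And>n. 1 \<le> \<omega> n" and a: "a \<in> l1w \<omega>"
  shows "norm (infsum a A) \<le> l1w_norm \<omega> a"
proof -
  have hs: "((\<lambda>n. cmod (a n) * \<omega> n) has_sum l1w_norm \<omega> a) UNIV"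
    by (rule l1w_weighted_has_sum[OF w a])
  have s0: "(\<lambda>n. cmod (a n) * \<omega> n) summable_on UNIV"
    using hs by (rule has_sum_imp_summable)
  have s1: "(\<lambda>n. cmod (a n) * \<omega> n) summable_on A"
    using summable_on_subset[OF s0 subset_UNIV] .
  have "norm (infsum a A) \<le> infsum (\<lambda>n. cmod (a n) * \<omega> n) A"
  proof (rule norm_infsum_le)
    show "(a has_sum infsum a A) A" using l1w_summable_on[OF w a] by (rule has_sum_infsum)
    show "((\<lambda>n. cmod (a n) * \<omega> n) has_sum infsum (\<lambda>n. cmod (a n) * \<omega> n) A) A"
      using s1 by (rule has_sum_infsum)
    fix n show "norm (a n) \<le> cmod (a n) * \<omega> n"
      using w[of n] by (simp add: mult_le_cancel_left1)
  qed
  also have "\<dots> \<le> infsum (\<lambda>n. cmod (a n) * \<omega> n) UNIV"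
  proof (rule infsum_mono_neutral[OF s1])
    show "(\<lambda>n. cmod (a n) * \<omega> n) summable_on UNIV" by (rule s0)
  next
    fix x show "0 \<le> cmod (a x) * \<omega> x" by (rule wnn[OF w])
  qed simp_all
  also have "\<dots> = l1w_norm \<omega> a" using hs by (rule infsumI)
  finally show ?thesis .
qed

lemma l1w_point_le:
  assumes w: "\<And>n. 1 \<le> \<omega> n" and a: "a \<in> l1w \<omega>"
  shows "cmod (a n) * \<omega> n \<le> l1w_norm \<omega> a"
proof -
  have "sum (\<lambda>n. cmod (a n) * \<omega> n) {n} \<le> (\<Sum>n. cmod (a n) * \<omega> n)"
  proof (rule sum_le_suminf)
    show "summable (\<lambda>n. cmod (a n) * \<omega> n)" using a by (simp add: l1w_def)
  next
    fix x show "0 \<le> cmod (a x) * \<omega> x" by (rule wnn[OF w])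
  qed simp_all
  then show ?thesis by (simp add: l1w_norm_def)
qed

lemma prod_summable:
  assumes w: "\<And>n. 1 \<le> \<omega> n" and a: "a \<in> l1w \<omega>" and b: "b \<in> l1w \<omega>"
  shows "(\<lambda>(m,n). a m * b n) summable_on S"
proof -
  have "(\<lambda>(m,n). norm (a m) * norm (b n)) summable_on Sigma UNIV (\<lambda>_. UNIV)"
  proof (rule summable_on_SigmaI)
    fix m :: nat
    show "((\<lambda>n. case (m, n) of (m, n) \<Rightarrow> norm (a m) * norm (b n)) has_sum
          norm (a m) * infsum (\<lambda>n. norm (b n)) UNIV) UNIV"
      using has_sum_cmult_right[OF has_sum_infsum[OF l1w_abs_summable_on[OF w b]]] by simp
    show "(\<lambda>m. norm (a m) * infsum (\<lambda>n. norm (b n)) UNIV) summable_on UNIV"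
      by (rule summable_on_cmult_left[OF l1w_abs_summable_on[OF w a]])
  qed auto
  then have "(\<lambda>p. norm ((\<lambda>(m,n). a m * b n) p)) summable_on UNIV"
    by (simp add: case_prod_unfold norm_mult)
  then have "(\<lambda>(m,n). a m * b n) summable_on UNIV"
    using summable_on_iff_abs_summable_on_complex by blast
  then show ?thesis by (rule summable_on_subset) auto
qed




lemma tail_prod:
  assumes w: "\<And>n. 1 \<le> \<omega> n" and a: "a \<in> l1w \<omega>" and b: "b \<in> l1w \<omega>"
  shows "infsum (minconv a b) {N<..} = infsum a {N<..} * infsum b {N<..}"
proof -
  define G where "G = (\<lambda>(m::nat,n::nat). a m * b n)"
  define S where "S = Sigma {N<..} (\<lambda>k::nat. {(m::nat,n::nat). min m n = k})"
  have inj: "inj_on snd S" unfolding S_def inj_on_def by auto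
  have img1: "snd ` S \<subseteq> {N<..} \<times> {N<..}" unfolding S_def by auto
  have img2: "{N<..} \<times> {N<..} \<subseteq> snd ` S"
  proof
    fix p assume p: "p \<in> {N<..} \<times> {N<..}"
    then have "(min (fst p) (snd p), p) \<in> S" unfolding S_def by (auto simp: case_prod_unfold)
    then show "p \<in> snd ` S" by (rule rev_image_eqI) simp
  qed
  have img: "snd ` S = {N<..} \<times> {N<..}" using img1 img2 by (rule antisym)
  have sG: "G summable_on (snd ` S)" unfolding G_def by (rule prod_summable[OF w a b])
  have sS: "(G \<circ> snd) summable_on S"
    using sG summable_on_reindex[OF inj, of G] by blast
  have sS': "(\<lambda>(k,p). G p) summable_on S"
    using sS by (simp add: o_def case_prod_unfold)
  have "infsum (minconv a b) {N<..} = infsum (\<lambda>k. infsum G {(m,n). min m n = k}) {N<..}"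
    unfolding minconv_def G_def by (rule refl)
  also have "\<dots> = infsum (\<lambda>(k,p). G p) S"
    unfolding S_def by (rule infsum_Sigma'_banach) (use sS' in \<open>simp only: S_def\<close>)
  also have "\<dots> = infsum (G \<circ> snd) S"
    by (simp add: o_def case_prod_unfold)
  also have "\<dots> = infsum G (snd ` S)"
    by (rule infsum_reindex[OF inj, symmetric])
  also have "\<dots> = infsum (\<lambda>(m,n). a m * b n) (Sigma {N<..} (\<lambda>_. {N<..}))"
    unfolding img G_def by (rule refl)
  also have "\<dots> = infsum (\<lambda>m. infsum (\<lambda>n. a m * b n) {N<..}) {N<..}"
    by (rule infsum_Sigma'_banach[symmetric]) (rule prod_summable[OF w a b])
  also have "\<dots> = infsum (\<lambda>m. a m * infsum b {N<..}) {N<..}"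
    by (simp add: infsum_cmult_right l1w_summable_on[OF w b])
  also have "\<dots> = infsum a {N<..} * infsum b {N<..}"
    by (simp add: infsum_cmult_left l1w_summable_on[OF w a])
  finally show ?thesis .
qed

lemma minconv_at:
  assumes w: "\<And>n. 1 \<le> \<omega> n" and a: "a \<in> l1w \<omega>" and b: "b \<in> l1w \<omega>"
  shows "minconv a b N = a N * infsum b {N..} + infsum a {N<..} * b N"
proof -
  define G where "G = (\<lambda>(m,n). a m * b n)"
  have eq: "{(m,n). min m n = N} = (\<lambda>n. (N,n)) ` {N..} \<union> (\<lambda>m. (m,N)) ` {N<..}"
    by (auto simp: image_iff min_def split: if_splits)
  have "minconv a b N = infsum G ((\<lambda>n. (N,n)) ` {N..} \<union> (\<lambda>m. (m,N)) ` {N<..})"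
    by (simp add: minconv_def G_def eq)
  also have "\<dots> = infsum G ((\<lambda>n. (N,n)) ` {N..}) + infsum G ((\<lambda>m. (m,N)) ` {N<..})"
    by (rule infsum_Un_disjoint) (auto simp: G_def intro!: prod_summable[OF w a b])
  also have "infsum G ((\<lambda>n. (N,n)) ` {N..}) = infsum (\<lambda>n. a N * b n) {N..}"
    by (subst infsum_reindex) (auto simp: inj_on_def G_def o_def)
  also have "\<dots> = a N * infsum b {N..}"
    by (simp add: infsum_cmult_right l1w_summable_on[OF w b])
  also have "infsum G ((\<lambda>m. (m,N)) ` {N<..}) = infsum (\<lambda>m. a m * b N) {N<..}"
    by (subst infsum_reindex) (auto simp: inj_on_def G_def o_def)
  also have "\<dots> = infsum a {N<..} * b N"
    by (simp add: infsum_cmult_left l1w_summable_on[OF w a])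
  finally show ?thesis .
qed

lemma infsum_split_first:
  assumes w: "\<And>n. 1 \<le> \<omega> n" and a: "a \<in> l1w \<omega>"
  shows "infsum a {N..} = a N + infsum a {N<..}"
proof -
  have "{N..} = insert N {N<..}" by auto
  then show ?thesis
    by (simp add: infsum_insert l1w_summable_on[OF w a])
qed



definition Qm :: "real \<Rightarrow> complex^2^2" where
  "Qm X = (\<chi> i j. if i = 1 \<and> j = 1 then 1 else if i = 1 \<and> j = 2 then complex_of_real X else 0)"

lemma two_ne: "(1::2) \<noteq> 2" by simp

lemma Qm_entries: "Qm X $ 1 $ 1 = 1" "Qm X $ 1 $ 2 = complex_of_real X" "Qm X $ 2 $ 1 = 0" "Qm X $ 2 $ 2 = 0"
  by (simp_all add: Qm_def)

lemma Qm_sq: "Qm X ** Qm X = Qm X"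
  by (simp add: vec_eq_iff matrix_matrix_mult_def sum_2 forall_2 Qm_def)

lemma Qm_sum: "X \<ge> 0 \<Longrightarrow> (\<Sum>i\<in>UNIV. \<Sum>j\<in>UNIV. cmod (Qm X $i$j)) = 1 + X"
  by (simp add: sum_2 Qm_entries)

lemma scal_mult: "(\<chi> i j. x * M$i$j) ** (\<chi> i j. y * M$i$j) = (\<chi> i j. (x*y) * (M ** M)$i$j)"
  for M :: "complex^2^2"
  by (simp add: vec_eq_iff matrix_matrix_mult_def sum_2 algebra_simps)

lemma m2_scal: "m2norm (\<chi> i j. z * M$i$j) \<le> cmod z * (\<Sum>i\<in>UNIV. \<Sum>j\<in>UNIV. cmod (M$i$j))"
  for M :: "complex^2^2"
proof -
  have "m2norm (\<chi> i j. z * M$i$j) \<le> (\<Sum>i\<in>UNIV. \<Sum>j\<in>UNIV. cmod ((\<chi> i j. z * M$i$j)$i$j))"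
    by (rule m2_bound)
  also have "\<dots> = cmod z * (\<Sum>i\<in>UNIV. \<Sum>j\<in>UNIV. cmod (M$i$j))"
    by (simp add: norm_mult sum_distrib_left)
  finally show ?thesis .
qed

lemma m2_diff: "m2norm (A - B) \<le> 4 * (m2norm A + m2norm B)"
proof -
  have "m2norm (A - B) \<le> (\<Sum>i\<in>UNIV. \<Sum>j\<in>UNIV. cmod ((A - B)$i$j))" by (rule m2_bound)
  also have "\<dots> \<le> (\<Sum>i\<in>(UNIV::2 set). \<Sum>j\<in>(UNIV::2 set). m2norm A + m2norm B)"
  proof (intro sum_mono)
    fix i j
    have "cmod ((A - B)$i$j) \<le> cmod (A$i$j) + cmod (B$i$j)"
      by (simp add: norm_triangle_ineq4)
    also have "\<dots> \<le> m2norm A + m2norm B" by (intro add_mono m2_entry)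
    finally show "cmod ((A - B)$i$j) \<le> m2norm A + m2norm B" .
  qed
  also have "\<dots> = 4 * (m2norm A + m2norm B)" by simp
  finally show ?thesis .
qed

lemma idem_alg:
  fixes P R :: "complex^2^2"
  assumes "P ** P = P" "R ** R = R" "P ** R = P" "R ** P = P"
    and "P$1$2 \<noteq> 0" "R$1$2 \<noteq> 0"
  shows "P$1$2 = R$1$2"
proof -
  have e: "(M ** M')$1$2 = M$1$1 * M'$1$2 + M$1$2 * M'$2$2" for M M' :: "complex^2^2"
    by (simp add: matrix_matrix_mult_def sum_2)
  from assms(1) have pp: "P$1$1 * P$1$2 + P$1$2 * P$2$2 = P$1$2" using e[of P P] by simp
  from assms(2) have rr: "R$1$1 * R$1$2 + R$1$2 * R$2$2 = R$1$2" using e[of R R] by simp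
  from assms(3) have pr: "P$1$1 * R$1$2 + P$1$2 * R$2$2 = P$1$2" using e[of P R] by simp
  from assms(4) have rp: "R$1$1 * P$1$2 + R$1$2 * P$2$2 = P$1$2" using e[of R P] by simp
  have tp: "P$1$1 + P$2$2 = 1"
  proof -
    have "P$1$2 * (P$1$1 + P$2$2 - 1) = 0" using pp by (simp add: algebra_simps)
    then show ?thesis using assms(5) by simp
  qed
  have tr: "R$1$1 + R$2$2 = 1"
  proof -
    have "R$1$2 * (R$1$1 + R$2$2 - 1) = 0" using rr by (simp add: algebra_simps)
    then show ?thesis using assms(6) by simp
  qed
  have "(R$1$2 - P$1$2) * ((R$1$1 + R$2$2) - (P$1$1 + P$2$2)) =
     (R$1$1 * R$1$2 + R$1$2 * R$2$2) - (P$1$1 * R$1$2 + P$1$2 * R$2$2)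
     - (R$1$1 * P$1$2 + R$1$2 * P$2$2) + (P$1$1 * P$1$2 + P$1$2 * P$2$2)"
    by (simp add: algebra_simps)
  also have "\<dots> = R$1$2 - P$1$2" unfolding pp rr pr rp by simp
  finally have "(R$1$2 - P$1$2) * ((R$1$1 + R$2$2) - (P$1$1 + P$2$2)) = R$1$2 - P$1$2" .
  then show ?thesis using tp tr by simp
qed



definition dd :: "nat \<Rightarrow> nat \<Rightarrow> complex" where "dd n = (\<lambda>k. if k = n then 1 else 0)"

lemma infsum_pt: "infsum (\<lambda>p. if p = q then (1::complex) else 0) S = (if q \<in> S then 1 else 0)"
proof -
  have "infsum (\<lambda>p. if p = q then (1::complex) else 0) S = infsum (\<lambda>p. if p = q then (1::complex) else 0) (S \<inter> {q})"
    by (rule infsum_cong_neutral) auto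
  also have "\<dots> = (if q \<in> S then 1 else 0)"
    by (cases "q \<in> S") auto
  finally show ?thesis .
qed

lemma dd_infsum: "infsum (dd n) A = (if n \<in> A then 1 else 0)"
  unfolding dd_def by (rule infsum_pt)

lemma minconv_dd: "minconv (dd i) (dd j) = dd (min i j)"
proof
  fix k
  have "(\<lambda>(m,n). dd i m * dd j n) = (\<lambda>p. if p = (i,j) then (1::complex) else 0)"
    by (auto simp: dd_def fun_eq_iff)
  then have "minconv (dd i) (dd j) k = infsum (\<lambda>p. if p = (i,j) then (1::complex) else 0) {(m, n). min m n = k}"
    by (simp add: minconv_def)
  also have "\<dots> = dd (min i j) k" by (simp add: infsum_pt dd_def)
  finally show "minconv (dd i) (dd j) k = dd (min i j) k" .
qed

lemma dd_scaled_eq: "(\<lambda>k. cmod (z * dd n k) * \<omega> k) = (\<lambda>k. if k = n then cmod z * \<omega> k else 0)"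
  by (auto simp: dd_def fun_eq_iff)

lemma dd_l1w: "(\<lambda>k. z * dd n k) \<in> l1w \<omega>"
  unfolding l1w_def using summable_single[of n "\<lambda>k. cmod z * \<omega> k"] by (simp add: dd_scaled_eq)

lemma dd_norm: "l1w_norm \<omega> (\<lambda>k. z * dd n k) = cmod z * \<omega> n"
  unfolding l1w_norm_def dd_scaled_eq using sums_single[of n "\<lambda>k. cmod z * \<omega> k"] by (simp add: sums_iff)

lemma zero_l1w: "(\<lambda>k. 0) \<in> l1w \<omega>" and zero_norm: "l1w_norm \<omega> (\<lambda>k. 0) = 0"
  by (simp_all add: l1w_def l1w_norm_def)



lemma l1w_norm_nonneg:
  assumes a: "a \<in> l1w \<omega>" and w: "\<And>n. 1 \<le> \<omega> n" shows "0 \<le> l1w_norm \<omega> a"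
  unfolding l1w_norm_def
proof (rule suminf_nonneg)
  show "summable (\<lambda>n. cmod (a n) * \<omega> n)" using a by (simp add: l1w_def)
  fix n show "0 \<le> cmod (a n) * \<omega> n" by (rule wnn[OF w])
qed

lemma main_T:
  fixes \<omega> :: "nat \<Rightarrow> real" and \<delta> :: real
  assumes w: "\<And>n. 1 \<le> \<omega> n" and dpos: "\<delta> > 0" and WN: "\<omega> N > 4 / \<delta>"
  shows "\<exists>T. bounded_lin_l1w \<omega> T \<and> defect \<omega> T \<le> \<delta> \<and> \<not> dist_Mult \<omega> T \<le> 1"
proof -
  define W where "W = \<omega> N"
  define w' where "w' = \<omega> (Suc N)"
  define X where "X = 4 * (W + w')"
  define t where "t = 2 * W / X"
  have W1: "W \<ge> 1" and w1: "w' \<ge> 1" using w by (auto simp: W_def w'_def)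
  have Xpos: "X > 0" and X1: "X \<ge> 1" using W1 w1 by (auto simp: X_def)
  have tX: "t * X = 2 * W" using Xpos by (simp add: t_def)
  have t0: "0 < t" using W1 Xpos by (simp add: t_def)
  have th: "t \<le> 1/2" using W1 w1 by (simp add: t_def X_def field_simps)
  define c where "c a = complex_of_real t * a N + infsum a {N<..}" for a :: "nat \<Rightarrow> complex"
  define T where "T a = (\<chi> i j. c a * Qm X $i$j)" for a
  have lin1: "c (\<lambda>n. a n + b n) = c a + c b" if "a \<in> l1w \<omega>" "b \<in> l1w \<omega>" for a b
    unfolding c_def
    by (simp add: infsum_add[OF l1w_summable_on[OF w that(1)] l1w_summable_on[OF w that(2)]] algebra_simps)
  have lin2: "c (\<lambda>n. z * a n) = z * c a" if "a \<in> l1w \<omega>" for a z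
    unfolding c_def
    by (simp add: infsum_cmult_right[OF l1w_summable_on[OF w that]] algebra_simps)
  have cb: "cmod (c a) \<le> (t + 1) * l1w_norm \<omega> a" if a: "a \<in> l1w \<omega>" for a
  proof -
    have p: "cmod (a N) \<le> l1w_norm \<omega> a"
      using l1w_point_le[OF w a, of N] w[of N] 
      by (smt (verit, ccfv_SIG) mult_le_cancel_left1 norm_ge_zero)
    have "cmod (c a) \<le> t * cmod (a N) + norm (infsum a {N<..})"
      unfolding c_def using t0 by (smt (verit) norm_mult norm_of_real norm_triangle_ineq)
    also have "\<dots> \<le> t * l1w_norm \<omega> a + l1w_norm \<omega> a"
      using p l1w_infsum_le[OF w a] t0 by (intro add_mono mult_left_mono) auto
    finally show ?thesis by (simp add: algebra_simps)
  qed
  have Qs: "(\<Sum>i\<in>UNIV. \<Sum>j\<in>UNIV. cmod (Qm X $i$j)) = 1 + X" using Xpos by (simp add: Qm_sum)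
  have Tb: "m2norm (T a) \<le> cmod (c a) * (1 + X)" for a
    unfolding T_def using m2_scal[of "c a" "Qm X"] Qs by simp
  have BL: "bounded_lin_l1w \<omega> T"
    unfolding bounded_lin_l1w_def
  proof (intro conjI ballI allI)
    fix a b assume "a \<in> l1w \<omega>" "b \<in> l1w \<omega>"
    then show "T (\<lambda>n. a n + b n) = T a + T b"
      by (simp add: T_def lin1 vec_eq_iff algebra_simps)
  next
    fix a z assume "a \<in> l1w \<omega>"
    then show "T (\<lambda>n. z * a n) = (\<chi> i j. z * T a $ i $ j)"
      by (simp add: T_def lin2 vec_eq_iff algebra_simps)
  next
    show "\<exists>K. \<forall>a\<in>l1w \<omega>. m2norm (T a) \<le> K * l1w_norm \<omega> a"
    proof (intro exI ballI)
      fix a assume a: "a \<in> l1w \<omega>"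
      have "m2norm (T a) \<le> cmod (c a) * (1 + X)" by (rule Tb)
      also have "\<dots> \<le> (t + 1) * l1w_norm \<omega> a * (1 + X)"
        using cb[OF a] Xpos by (intro mult_right_mono) auto
      finally show "m2norm (T a) \<le> ((t + 1) * (1 + X)) * l1w_norm \<omega> a" by (simp add: algebra_simps)
    qed
  qed
  have pt: "cmod (a N) \<le> 1 / W" if a: "a \<in> l1w \<omega>" "l1w_norm \<omega> a \<le> 1" for a
  proof -
    have "cmod (a N) * W \<le> 1" using l1w_point_le[OF w a(1), of N] a(2) by (simp add: W_def)
    then show ?thesis using W1 by (simp add: field_simps)
  qed
  have DEF: "defect \<omega> T \<le> \<delta>"
    unfolding defect_def
  proof (rule cSup_least)
    show "{m2norm (T (minconv a b) - T a ** T b) |a b.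
        a \<in> l1w \<omega> \<and> b \<in> l1w \<omega> \<and> l1w_norm \<omega> a \<le> 1 \<and> l1w_norm \<omega> b \<le> 1} \<noteq> {}"
      using zero_l1w zero_norm by fastforce
  next
    fix x assume "x \<in> {m2norm (T (minconv a b) - T a ** T b) |a b.
        a \<in> l1w \<omega> \<and> b \<in> l1w \<omega> \<and> l1w_norm \<omega> a \<le> 1 \<and> l1w_norm \<omega> b \<le> 1}"
    then obtain a b where x: "x = m2norm (T (minconv a b) - T a ** T b)"
      and a: "a \<in> l1w \<omega>" and b: "b \<in> l1w \<omega>" and na: "l1w_norm \<omega> a \<le> 1" and nb: "l1w_norm \<omega> b \<le> 1"
      by blast
    define At where "At = infsum a {N<..}"
    define Bt where "Bt = infsum b {N<..}"
    have cm: "c (minconv a b) = complex_of_real t * (a N * (b N + Bt) + At * b N) + At * Bt"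
      unfolding c_def minconv_at[OF w a b] tail_prod[OF w a b] infsum_split_first[OF w b] At_def Bt_def ..
    have cd: "c (minconv a b) - c a * c b = complex_of_real (t - t * t) * (a N * b N)"
      unfolding cm by (simp add: c_def At_def[symmetric] Bt_def[symmetric] algebra_simps)
    have TT: "T (minconv a b) - T a ** T b = (\<chi> i j. (c (minconv a b) - c a * c b) * Qm X $i$j)"
      unfolding T_def scal_mult Qm_sq by (simp add: vec_eq_iff algebra_simps)
    have "x \<le> cmod (c (minconv a b) - c a * c b) * (1 + X)"
      unfolding x TT using m2_scal[of "c (minconv a b) - c a * c b" "Qm X"] Qs by simp
    also have "cmod (c (minconv a b) - c a * c b) = (t - t*t) * (cmod (a N) * cmod (b N))"
    proof -
      have "t * t \<le> t * 1" using t0 th by (intro mult_left_mono) auto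
      then have ab: "\<bar>t - t*t\<bar> = t - t*t" by simp
      show ?thesis unfolding cd by (simp only: norm_mult norm_of_real ab)
    qed
    also have "\<dots> \<le> t * (1/W * (1/W))"
    proof (rule mult_mono)
      show "t - t*t \<le> t" using t0 by simp
      show "cmod (a N) * cmod (b N) \<le> 1/W * (1/W)"
        using pt[OF a na] pt[OF b nb] W1 by (intro mult_mono) auto
    qed (use t0 th W1 in auto)
    also have "t * (1/W * (1/W)) * (1 + X) = (2 * (1 + X) / X) / W"
      using Xpos W1 by (simp add: t_def field_simps)
    also have "\<dots> \<le> 4 / W"
      using Xpos X1 W1 by (intro divide_right_mono) (auto simp: field_simps)
    also have "\<dots> \<le> \<delta>"
      using WN dpos W1 by (simp add: W_def field_simps)
    finally show "x \<le> \<delta>" using Xpos by (simp add: mult_right_mono)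
  qed
  have dd1: "dd n \<in> l1w \<omega>" for n using dd_l1w[of 1 n \<omega>] by simp
  have cdN: "c (dd N) = complex_of_real t" by (simp add: c_def dd_infsum) (simp add: dd_def)
  have cdS: "c (dd (Suc N)) = 1" by (simp add: c_def dd_infsum) (simp add: dd_def)
  have TdN: "T (dd N) $ 1 $ 2 = complex_of_real (2 * W)"
    by (simp add: T_def cdN Qm_entries tX[symmetric])
  have TdS: "T (dd (Suc N)) $ 1 $ 2 = complex_of_real X"
    by (simp add: T_def cdS Qm_entries)
  have zeroM: "(\<lambda>a. 0) \<in> Mult_l1w \<omega>"
    unfolding Mult_l1w_def bounded_lin_l1w_def
  proof (intro CollectI conjI ballI allI exI)
    fix a :: "nat \<Rightarrow> complex"
    show "m2norm (0::complex^2^2) \<le> 0 * l1w_norm \<omega> a"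
      using m2_bound[of "0::complex^2^2"] by simp
  qed (simp_all add: vec_eq_iff)
  have big: "op_norm_l1w \<omega> (\<lambda>a. T a - S a) \<ge> 2" if S: "S \<in> Mult_l1w \<omega>" for S
  proof (rule ccontr)
    assume less: "\<not> op_norm_l1w \<omega> (\<lambda>a. T a - S a) \<ge> 2"
    from S have BS: "bounded_lin_l1w \<omega> S" and MS: "\<And>a b. a \<in> l1w \<omega> \<Longrightarrow> b \<in> l1w \<omega> \<Longrightarrow> S (minconv a b) = S a ** S b"
      by (auto simp: Mult_l1w_def)
    from BS obtain KS where KS: "\<forall>a\<in>l1w \<omega>. m2norm (S a) \<le> KS * l1w_norm \<omega> a"
      unfolding bounded_lin_l1w_def by blast
    from BS have Ssc: "\<And>a z. a \<in> l1w \<omega> \<Longrightarrow> S (\<lambda>n. z * a n) = (\<chi> i j. z * S a $ i $ j)"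
      by (auto simp: bounded_lin_l1w_def)
    from BL have Tsc: "\<And>a z. a \<in> l1w \<omega> \<Longrightarrow> T (\<lambda>n. z * a n) = (\<chi> i j. z * T a $ i $ j)"
      by (auto simp: bounded_lin_l1w_def)
    define KT where "KT = (t + 1) * (1 + X)"
    have KT: "m2norm (T a) \<le> KT * l1w_norm \<omega> a" if "a \<in> l1w \<omega>" for a
    proof -
      have "m2norm (T a) \<le> cmod (c a) * (1 + X)" by (rule Tb)
      also have "\<dots> \<le> (t + 1) * l1w_norm \<omega> a * (1 + X)"
        using cb[OF that] Xpos by (intro mult_right_mono) auto
      finally show ?thesis by (simp add: KT_def algebra_simps)
    qed
    have bdd: "bdd_above {m2norm (T a - S a) | a. a \<in> l1w \<omega> \<and> l1w_norm \<omega> a \<le> 1}"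
    proof (rule bdd_aboveI)
      fix x assume "x \<in> {m2norm (T a - S a) | a. a \<in> l1w \<omega> \<and> l1w_norm \<omega> a \<le> 1}"
      then obtain a where x: "x = m2norm (T a - S a)" and a: "a \<in> l1w \<omega>" "l1w_norm \<omega> a \<le> 1" by blast
      have n0: "0 \<le> l1w_norm \<omega> a" by (rule l1w_norm_nonneg[OF a(1) w])
      have gen: "K * l1w_norm \<omega> a \<le> \<bar>K\<bar>" for K
      proof -
        have "K * l1w_norm \<omega> a \<le> \<bar>K\<bar> * l1w_norm \<omega> a" using n0 by (intro mult_right_mono) auto
        also have "\<dots> \<le> \<bar>K\<bar> * 1" using a(2) by (intro mult_left_mono) auto
        finally show ?thesis by simp
      qed
      have "m2norm (T a) \<le> \<bar>KT\<bar>"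
        using KT[OF a(1)] gen[of KT] by linarith
      moreover have "m2norm (S a) \<le> \<bar>KS\<bar>"
        using KS a(1) gen[of KS] by fastforce
      ultimately show "x \<le> 4 * (\<bar>KT\<bar> + \<bar>KS\<bar>)"
        using m2_diff[of "T a" "S a"] x by simp
    qed
    have ent: "cmod ((T (dd n) - S (dd n)) $ i $ j) < 2 * \<omega> n" for n i j
    proof -
      define e where "e = (\<lambda>k. complex_of_real (1 / \<omega> n) * dd n k)"
      have e1: "e \<in> l1w \<omega>" unfolding e_def by (rule dd_l1w)
      have e2: "l1w_norm \<omega> e \<le> 1" unfolding e_def dd_norm using w[of n] by (simp add: norm_divide)
      have "m2norm (T e - S e) \<le> op_norm_l1w \<omega> (\<lambda>a. T a - S a)"
        unfolding op_norm_l1w_def by (rule cSup_upper[OF _ bdd]) (use e1 e2 in blast)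
      also have "\<dots> < 2" using less by simp
      finally have lt: "m2norm (T e - S e) < 2" .
      have "(T e - S e) $ i $ j = complex_of_real (1 / \<omega> n) * (T (dd n) - S (dd n)) $ i $ j"
        unfolding e_def Tsc[OF dd1] Ssc[OF dd1] by (simp add: algebra_simps)
      then have "cmod ((T e - S e) $ i $ j) = cmod ((T (dd n) - S (dd n)) $ i $ j) / \<omega> n"
        using w[of n] by (simp add: norm_divide)
      with m2_entry[of "T e - S e" i j] lt have "cmod ((T (dd n) - S (dd n)) $ i $ j) / \<omega> n < 2" by simp
      then show ?thesis using w[of n] by (simp add: field_simps)
    qed
    define P where "P = S (dd N)"
    define R where "R = S (dd (Suc N))"
    have PP: "P ** P = P" unfolding P_def using MS[OF dd1 dd1, of N N] by (simp add: minconv_dd)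
    have RR: "R ** R = R" unfolding R_def using MS[OF dd1 dd1, of "Suc N" "Suc N"] by (simp add: minconv_dd)
    have PR: "P ** R = P" unfolding P_def R_def using MS[OF dd1 dd1, of N "Suc N"] by (simp add: minconv_dd)
    have RP: "R ** P = P" unfolding P_def R_def using MS[OF dd1 dd1, of "Suc N" N] by (simp add: minconv_dd)
    have eP: "cmod (complex_of_real (2 * W) - P $ 1 $ 2) < 2 * W"
      using ent[of N 1 2] by (simp add: TdN P_def W_def)
    have eR: "cmod (complex_of_real X - R $ 1 $ 2) < 2 * w'"
      using ent[of "Suc N" 1 2] by (simp add: TdS R_def w'_def)
    have P0: "P $ 1 $ 2 \<noteq> 0" using eP W1 by auto
    have R0: "R $ 1 $ 2 \<noteq> 0"
    proof
      assume h: "R $ 1 $ 2 = 0"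
      have "cmod (complex_of_real X) < 2 * w'" using eR by (simp only: h diff_zero)
      then have "X < 2 * w'" using Xpos by simp
      then show False using W1 w1 by (simp add: X_def)
    qed
    have eq: "P $ 1 $ 2 = R $ 1 $ 2" by (rule idem_alg[OF PP RR PR RP P0 R0])
    have "cmod (complex_of_real X - complex_of_real (2 * W)) \<le>
          cmod (complex_of_real X - R $ 1 $ 2) + cmod (complex_of_real (2 * W) - P $ 1 $ 2)"
      using eq norm_triangle_ineq4[of "complex_of_real X - R $ 1 $ 2" "complex_of_real (2 * W) - P $ 1 $ 2"]
      by (simp add: algebra_simps)
    also have "\<dots> < 2 * w' + 2 * W" using eP eR by simp
    finally have "\<bar>X - 2 * W\<bar> < 2 * w' + 2 * W"
      by (metis norm_of_real of_real_diff)
    then show False using W1 w1 by (simp add: X_def)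
  qed
  have DIST: "\<not> dist_Mult \<omega> T \<le> 1"
  proof -
    have "2 \<le> dist_Mult \<omega> T"
      unfolding dist_Mult_def
    proof (rule cInf_greatest)
      show "{op_norm_l1w \<omega> (\<lambda>a. T a - S a) |S. S \<in> Mult_l1w \<omega>} \<noteq> {}" using zeroM by blast
    next
      fix x assume "x \<in> {op_norm_l1w \<omega> (\<lambda>a. T a - S a) |S. S \<in> Mult_l1w \<omega>}"
      then show "2 \<le> x" using big by blast
    qed
    then show ?thesis by simp
  qed
  show ?thesis using BL DEF DIST by blast
qed

theorem theoremt:
  fixes \<omega> :: "nat \<Rightarrow> real"
  assumes "\<And>n. \<omega> n \<ge> 1"
    and "\<not> bdd_above (range \<omega>)"
  shows "\<not> uniformly_AMNM_l1w_M2 \<omega>"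
proof
  assume U: "uniformly_AMNM_l1w_M2 \<omega>"
  then obtain \<delta> where dpos: "\<delta> > 0"
    and H: "\<And>T. bounded_lin_l1w \<omega> T \<and> defect \<omega> T \<le> \<delta> \<longrightarrow> dist_Mult \<omega> T \<le> 1"
    unfolding uniformly_AMNM_l1w_M2_def by (meson zero_less_one)
  obtain N where N: "\<omega> N > 4 / \<delta>"
  proof (rule ccontr)
    assume "\<not> thesis"
    with that have "\<forall>N. \<omega> N \<le> 4 / \<delta>" by (meson not_le)
    then have "bdd_above (range \<omega>)" by (intro bdd_aboveI2) auto
    with assms(2) show False by simp
  qed
  from main_T[of \<omega> \<delta> N, OF assms(1) dpos N] obtain T where
    "bounded_lin_l1w \<omega> T" "defect \<omega> T \<le> \<delta>" "\<not> dist_Mult \<omega> T \<le> 1" by blast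
  with H[of T] show False by blast
qed


end
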